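(* Let $\mathcal U\subseteq\mathbb R^m$ be nonempty with $\underline{\dim}_{\mathrm{MB}}(\mathcal U)<n$, where $n\le m$. Then $\ker(\mathbf A)\cap(\mathcal U\setminus\{\mathbf 0\})=\emptyset$ for $\lambda^{n\times m}$-almost all $\mathbf A\in\mathbb R^{n\times m}$.
   Context: For nonempty $\mathcal{U}\subseteq\mathbb{R}^m$ and $\rho>0$, $N_{\mathcal U}(\rho)$ denotes the smallest number of open Euclidean balls of radius $\rho$ covering $\mathcal U$ ($=\infty$ if no finite cover exists). The lower Minkowski dimension is $\underline{\dim}_{\mathrm B}(\mathcal U)=\liminf_{\rho\to0}\frac{\log N_{\mathcal U}(\rho)}{\log(1/\rho)}$. The lower modified Minkowski dimension is $\underline{\dim}_{\mathrm{MB}}(\mathcal U)=\inf\{\sup_{i\in\mathbb N}\underline{\dim}_{\mathrm B}(\mathcal U_i):\mathcal U\subseteq\bigcup_{i\in\mathbb N}\mathcal U_i\}$, the infimum taken over all countable covers of $\mathcal U$ by nonempty bounded sets $\mathcal U_i$. $\lambda^{n\times m}$ is Lebesgue measure on $\mathbb R^{n\times m}$. *)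

theory Defs
  imports "HOL-Analysis.Analysis"
begin

text \<open>Covering number: smallest number of open balls of radius rho covering U
  (infinity if no finite cover exists).\<close>
definition covering_number :: "'a::metric_space set \<Rightarrow> real \<Rightarrow> enat" where
  "covering_number U \<rho> =
     Inf {enat (card C) | C. finite C \<and> U \<subseteq> (\<Union>c\<in>C. ball c \<rho>)}"

definition lower_box_dim :: "'a::metric_space set \<Rightarrow> ereal" where
  "lower_box_dim U = Liminf (at_right 0)
     (\<lambda>\<rho>. case covering_number U \<rho> of
              enat k \<Rightarrow> ereal (ln (real k) / ln (1 / \<rho>))
            | \<infinity> \<Rightarrow> \<infinity>)"

definition lower_mod_box_dim :: "'a::metric_space set \<Rightarrow> ereal" where
  "lower_mod_box_dim U = Inf {(SUP i. lower_box_dim (V i)) | V :: nat \<Rightarrow> 'a set.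
      (\<forall>i. V i \<noteq> {} \<and> bounded (V i)) \<and> U \<subseteq> (\<Union>i. V i)}"

end

theory Submission
  imports Defs
begin

lemma transl_emeasure:
  fixes c :: "'a::euclidean_space"
  assumes "A \<in> sets borel"
  shows "emeasure lborel {x. x + c \<in> A} = emeasure lborel A"
proof -
  have "emeasure (distr lborel borel ((+) c)) A = emeasure lborel ((+) c -` A \<inter> space lborel)"
    by (rule emeasure_distr) (auto simp: assms)
  then show ?thesis by (simp add: lborel_distr_plus vimage_def add.commute)
qed

lemma closed_box_mat: "closed {A::real^'m^'n. \<forall>i j. \<bar>A$i$j\<bar> \<le> t}"
  by (intro closed_Collect_all closed_Collect_le continuous_intros)

lemma closed_F: "closed {A::real^'m^'n. (\<forall>i j. \<bar>A$i$j\<bar> \<le> t) \<and> (\<forall>i. \<bar>(A *v c)$i\<bar> \<le> e)}"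
  unfolding matrix_vector_mult_def
  by (intro closed_Collect_conj closed_Collect_all closed_Collect_le continuous_intros)

lemma bounded_box_mat: "bounded {A::real^'m^'n. \<forall>i j. \<bar>A$i$j\<bar> \<le> t}"
proof -
  have "{A::real^'m^'n. \<forall>i j. \<bar>A$i$j\<bar> \<le> t} \<subseteq> cball 0 (real CARD('n) * (real CARD('m) * t))"
  proof
    fix A :: "real^'m^'n" assume "A \<in> {A. \<forall>i j. \<bar>A$i$j\<bar> \<le> t}"
    then have h: "\<And>i j. \<bar>A$i$j\<bar> \<le> t" by auto
    have "norm A \<le> (\<Sum>i\<in>UNIV. norm (A$i))" unfolding norm_vec_def by (rule L2_set_le_sum) auto
    also have "\<dots> \<le> (\<Sum>i\<in>(UNIV::'n set). real CARD('m) * t)"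
    proof (rule sum_mono)
      fix i
      have "norm (A$i) \<le> (\<Sum>j\<in>UNIV. \<bar>A$i$j\<bar>)" by (rule norm_le_l1_cart)
      also have "\<dots> \<le> (\<Sum>j\<in>(UNIV::'m set). t)" using h by (intro sum_mono) auto
      finally show "norm (A$i) \<le> real CARD('m) * t" by simp
    qed
    finally show "A \<in> cball 0 (real CARD('n) * (real CARD('m) * t))" by simp
  qed
  then show ?thesis using bounded_cball bounded_subset by blast
qed


definition boxm :: "real \<Rightarrow> (real^'m^'n) set" where
  "boxm t = {A. \<forall>i j. \<bar>A$i$j\<bar> \<le> t}"

definition slabm :: "real \<Rightarrow> real^'m \<Rightarrow> real \<Rightarrow> (real^'m^'n) set" where
  "slabm t c e = {A. (\<forall>i j. \<bar>A$i$j\<bar> \<le> t) \<and> (\<forall>i. \<bar>(A *v c)$i\<bar> \<le> e)}"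

lemma boxm_sets[measurable]: "(boxm t :: (real^'m^'n) set) \<in> sets lborel"
proof -
  have "closed (boxm t :: (real^'m^'n) set)" unfolding boxm_def by (rule closed_box_mat)
  then show ?thesis by simp
qed

lemma slabm_sets[measurable]: "(slabm t c e :: (real^'m^'n) set) \<in> sets lborel"
proof -
  have "closed (slabm t c e :: (real^'m^'n) set)" unfolding slabm_def by (rule closed_F)
  then show ?thesis by simp
qed

lemma boxm_fin: "emeasure lborel (boxm t :: (real^'m^'n) set) < \<infinity>"
  unfolding boxm_def by (rule emeasure_bounded_finite[OF bounded_box_mat])

lemma slabm_sub: "(slabm t c e :: (real^'m^'n) set) \<subseteq> boxm t"
  unfolding slabm_def boxm_def by auto

lemma slabm_fin: "emeasure lborel (slabm t c e :: (real^'m^'n) set) < \<infinity>"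
  using emeasure_mono[OF slabm_sub boxm_sets] boxm_fin by (rule order.strict_trans1)

lemma emeasure_boxm: "emeasure lborel (boxm t :: (real^'m^'n) set) = ennreal (measure lborel (boxm t :: (real^'m^'n) set))"
  apply (rule emeasure_eq_ennreal_measure)
  using boxm_fin[of t] by (simp add: less_top)

lemma emeasure_slabm: "emeasure lborel (slabm t c e :: (real^'m^'n) set) = ennreal (measure lborel (slabm t c e :: (real^'m^'n) set))"
  apply (rule emeasure_eq_ennreal_measure)
  using slabm_fin[of t c e] by (simp add: less_top)

lemma boxm_fmeas: "(boxm t :: (real^'m^'n) set) \<in> fmeasurable lborel"
  using boxm_fin boxm_sets by (auto simp: fmeasurable_def)

lemma boxm_mono: assumes "t \<le> t'" shows "measure lborel (boxm t :: (real^'m^'n) set) \<le> measure lborel (boxm t' :: (real^'m^'n) set)"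
proof (rule measure_mono_fmeasurable)
  show "(boxm t :: (real^'m^'n) set) \<subseteq> boxm t'" using assms unfolding boxm_def by (auto intro: order_trans)
qed (use boxm_fmeas boxm_sets in simp_all)

lemma slabm_le_box: "measure lborel (slabm t c e :: (real^'m^'n) set) \<le> measure lborel (boxm t :: (real^'m^'n) set)"
  by (rule measure_mono_fmeasurable[OF slabm_sub slabm_sets boxm_fmeas])

lemma slab_bound:
  fixes c :: "real^'m" and j0 :: 'm
  assumes t: "t > 0" and e: "e > 0" and r: "r > 0" and cj: "\<bar>c$j0\<bar> \<ge> r"
  shows "measure lborel (slabm t c e :: (real^'m^'n) set)
           \<le> measure lborel (boxm (t+1) :: (real^'m^'n) set) * (6*e/r)^CARD('n)"
proof -
  define F where "F = (slabm t c e :: (real^'m^'n) set)"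
  define M where "M = measure lborel (boxm (t+1) :: (real^'m^'n) set)"
  define s where "s = 3*e/\<bar>c$j0\<bar>"
  have cpos: "\<bar>c$j0\<bar> > 0" using cj r by linarith
  have spos: "s > 0" using e cpos by (simp add: s_def)
  have s6: "2 * s \<le> 6 * e / r"
  proof -
    have "2 * s = 6 * e / \<bar>c$j0\<bar>" by (simp add: s_def)
    also have "\<dots> \<le> 6 * e / r" using e r cj by (intro divide_left_mono) auto
    finally show ?thesis .
  qed
  have M0: "M \<ge> 0" by (simp add: M_def)
  have "measure lborel F \<le> measure lborel (boxm t :: (real^'m^'n) set)" unfolding F_def by (rule slabm_le_box)
  also have "\<dots> \<le> M" unfolding M_def by (rule boxm_mono) simp
  finally have FM: "measure lborel F \<le> M" .
  define K where "K = nat \<lfloor>1/s\<rfloor>"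
  have Kf: "real K = of_int \<lfloor>1/s\<rfloor>" using spos by (simp add: K_def)
  have K1: "real K + 1 > 1/s" using Kf by linarith
  have K0: "real K \<le> 1/s" using Kf by linarith
  have K2: "real K * s \<le> 1" using K0 spos by (simp add: le_divide_eq)
  show ?thesis
  proof (cases "K = 0")
    case True
    then have "1/s < 1" using K1 by simp
    then have "s > 1" using spos by (simp add: divide_less_eq)
    then have "1 \<le> 6*e/r" using s6 by linarith
    then have "1 \<le> (6*e/r)^CARD('n)" by (simp add: one_le_power)
    then have "M \<le> M * (6*e/r)^CARD('n)" using M0 by (simp add: mult_le_cancel_left1)
    then show ?thesis using FM by (simp add: F_def M_def)
  next
    case False
    then have Kge: "real K \<ge> 1" by simp
    define I where "I = (PiE (UNIV::'n set) (\<lambda>_. {..<K}))"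
    define T where "T k = (\<chi> i j. if j = j0 then real (k i) * s else 0 :: real^'m^'n)" for k :: "'n \<Rightarrow> nat"
    define G where "G k = {A. A + (- T k) \<in> F}" for k
    have Tc: "(T k *v c)$i = real (k i) * s * c$j0" for k i
      proof -
      have "(T k *v c)$i = (\<Sum>j\<in>UNIV. (if j = j0 then real (k i) * s * c$j else 0))"
        unfolding T_def matrix_vector_mult_def vec_lambda_beta by (rule sum.cong) auto
      also have "\<dots> = real (k i) * s * c$j0" by (simp add: sum.delta)
      finally show ?thesis .
    qed
    have Fb: "F \<in> sets borel" using slabm_sets unfolding F_def by simp
    have Gem: "emeasure lborel (G k) = emeasure lborel F" for k
      unfolding G_def by (rule transl_emeasure[OF Fb])
    have Gsets: "G k \<in> sets lborel" for k
    proof -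
      have "(\<lambda>A. A + (- T k)) \<in> borel_measurable borel" by measurable
      from measurable_sets[OF this Fb] show ?thesis by (simp add: G_def vimage_def)
    qed
    have Gsub: "G k \<subseteq> boxm (t+1)" if "k \<in> I" for k
    proof
      fix A assume "A \<in> G k"
      then have h: "\<bar>(A - T k)$i$j\<bar> \<le> t" for i j unfolding G_def F_def slabm_def by auto
      have "\<bar>T k $i$j\<bar> \<le> 1" for i j
      proof -
        have "k i < K" using that by (auto simp: I_def PiE_def Pi_def)
        then have "real (k i) * s \<le> real K * s" using spos by (simp add: mult_right_mono)
        then have "real (k i) * s \<le> 1" using K2 by linarith
        then show ?thesis using spos by (simp add: T_def)
      qed
      then show "A \<in> boxm (t+1)" using h unfolding boxm_def
        by (auto simp: abs_le_iff) (smt (verit) vector_minus_component)+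
    qed
    have disj: "disjoint_family_on G I"
    unfolding disjoint_family_on_def
    proof (intro ballI impI)
      fix k k' assume kI: "k \<in> I" "k' \<in> I" and ne: "k \<noteq> k'"
      then obtain i where ki: "k i \<noteq> k' i" by auto
      show "G k \<inter> G k' = {}"
      proof (rule ccontr)
        assume "G k \<inter> G k' \<noteq> {}"
        then obtain A where "A + (- T k) \<in> F" "A + (- T k') \<in> F" unfolding G_def by auto
        then have a1: "\<bar>((A + (- T k)) *v c)$i\<bar> \<le> e" and a2: "\<bar>((A + (- T k')) *v c)$i\<bar> \<le> e"
          unfolding F_def slabm_def mem_Collect_eq by blast+
        have "((A + (- T k)) *v c)$i = (A *v c)$i - real (k i) * s * c$j0"
          by (simp add: matrix_vector_mult_add_rdistrib matrix_vector_mult_diff_rdistrib Tc)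
        moreover have "((A + (- T k')) *v c)$i = (A *v c)$i - real (k' i) * s * c$j0"
          by (simp add: matrix_vector_mult_add_rdistrib matrix_vector_mult_diff_rdistrib Tc)
        ultimately have "\<bar>(real (k i) - real (k' i)) * s * c$j0\<bar> \<le> 2*e" using a1 a2
          by (simp add: algebra_simps)
        moreover have "\<bar>real (k i) - real (k' i)\<bar> \<ge> 1" using ki by linarith
        moreover have "s * \<bar>c$j0\<bar> = 3*e" using cpos by (simp add: s_def)
        moreover have "\<bar>(real (k i) - real (k' i)) * s * c$j0\<bar> = \<bar>real (k i) - real (k' i)\<bar> * (s * \<bar>c$j0\<bar>)"
          using spos by (simp add: abs_mult)
        moreover have "1 * (3*e) \<le> \<bar>real (k i) - real (k' i)\<bar> * (3*e)"
          using \<open>\<bar>real (k i) - real (k' i)\<bar> \<ge> 1\<close> e by (intro mult_right_mono) auto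
        ultimately have "1 * (3*e) \<le> 2*e" by (metis order.trans)
        then show False using e by simp
      qed
    qed
    have "(\<Sum>k\<in>I. emeasure lborel (G k)) = emeasure lborel (\<Union>k\<in>I. G k)"
      proof (rule sum_emeasure)
      show "finite I" unfolding I_def by (intro finite_PiE) auto
    qed (use Gsets disj in auto)
    also have "\<dots> \<le> emeasure lborel (boxm (t+1) :: (real^'m^'n) set)"
      by (rule emeasure_mono) (use Gsub boxm_sets in auto)
    finally have "of_nat (card I) * emeasure lborel F \<le> emeasure lborel (boxm (t+1) :: (real^'m^'n) set)"
      using Gem by simp
    then have "of_nat (card I) * emeasure lborel F \<le> ennreal M"
      unfolding M_def by (simp only: emeasure_boxm)
    moreover have "card I = K ^ CARD('n)" unfolding I_def by (simp add: card_PiE)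
    moreover have "emeasure lborel F = ennreal (measure lborel F)" unfolding F_def by (rule emeasure_slabm)
    ultimately have "ennreal (real K ^ CARD('n) * measure lborel F) \<le> ennreal M"
      by (simp add: ennreal_mult' ennreal_of_nat_eq_real_of_nat)
    then have KM: "real K ^ CARD('n) * measure lborel F \<le> M" using M0 by (simp add: ennreal_le_iff)
    have "1 < 2 * real K * s" using K1 Kge spos by (smt (verit, ccfv_SIG) divide_less_eq mult_right_mono)
    then have "1 / real K < 2 * s" using Kge by (simp add: divide_less_eq algebra_simps)
    then have iK: "1 / real K \<le> 6*e/r" using s6 by linarith
    have "measure lborel F = (real K ^ CARD('n) * measure lborel F) * (1 / real K) ^ CARD('n)"
      using Kge by (simp add: power_one_over)
    also have "\<dots> \<le> M * (6*e/r)^CARD('n)"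
      using KM iK M0 Kge by (intro mult_mono power_mono) auto
    finally show ?thesis by (simp add: F_def M_def)
  qed
qed


lemma null_from_small:
  fixes B :: "'a::euclidean_space set"
  assumes small: "\<And>\<eta>. \<eta> > 0 \<Longrightarrow> \<exists>E\<in>sets lborel. B \<subseteq> E \<and> emeasure lborel E \<le> ennreal \<eta>"
  shows "\<exists>N\<in>null_sets lborel. B \<subseteq> N"
proof -
  have "\<forall>j::nat. \<exists>E\<in>sets lborel. B \<subseteq> E \<and> emeasure lborel E \<le> ennreal (1 / real (Suc j))"
    using small by simp
  then obtain E where E: "\<And>j. E j \<in> sets lborel" "\<And>j. B \<subseteq> E j"
      "\<And>j. emeasure lborel (E j) \<le> ennreal (1 / real (Suc j))" by metis
  define N where "N = (\<Inter>j. E j)"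
  have Ns: "N \<in> sets lborel" unfolding N_def using E(1) by auto
  have "emeasure lborel N \<le> 0"
  proof (rule ennreal_le_epsilon)
    fix e :: real assume "0 < e"
    then obtain n where n: "n > 0" "inverse (real n) < e" using ex_inverse_of_nat_less by blast
    then obtain j where j: "n = Suc j" by (cases n) auto
    have "emeasure lborel N \<le> emeasure lborel (E j)"
      by (rule emeasure_mono[OF _ E(1)]) (auto simp: N_def)
    also have "\<dots> \<le> ennreal (1 / real (Suc j))" by (rule E(3))
    also have "\<dots> \<le> ennreal e" using n j by (intro ennreal_leI) (simp add: inverse_eq_divide)
    finally show "emeasure lborel N \<le> 0 + ennreal e" by simp
  qed
  then have "N \<in> null_sets lborel" using Ns by (auto simp: null_sets_def)
  moreover have "B \<subseteq> N" unfolding N_def using E(2) by auto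
  ultimately show ?thesis by blast
qed

lemma freq_small:
  fixes W :: "'a::metric_space set"
  assumes "lower_box_dim W < ereal s'"
  shows "\<exists>\<^sub>F \<rho> in at_right (0::real). (case covering_number W \<rho> of
              enat k \<Rightarrow> ereal (ln (real k) / ln (1 / \<rho>))
            | \<infinity> \<Rightarrow> \<infinity>) < ereal s'"
proof (rule ccontr)
  assume "\<not> ?thesis"
  then have "eventually (\<lambda>\<rho>. ereal s' \<le> (case covering_number W \<rho> of
              enat k \<Rightarrow> ereal (ln (real k) / ln (1 / \<rho>))
            | \<infinity> \<Rightarrow> \<infinity>)) (at_right (0::real))"
    by (simp add: not_frequently not_less)
  then have "ereal s' \<le> lower_box_dim W" unfolding lower_box_dim_def by (rule Liminf_bounded)
  with assms show False by simp
qed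

lemma cover_obtain:
  fixes U :: "'a::metric_space set"
  assumes "covering_number U \<rho> = enat k"
  obtains C where "finite C" "card C = k" "U \<subseteq> (\<Union>c\<in>C. ball c \<rho>)"
proof -
  define S where "S = {enat (card C) | C. finite C \<and> U \<subseteq> (\<Union>c\<in>C. ball c \<rho>)}"
  have cn: "covering_number U \<rho> = Inf S" unfolding covering_number_def S_def ..
  have "S \<noteq> {}" using assms cn by (auto simp: Inf_enat_def)
  then have "Inf S \<in> S" unfolding Inf_enat_def by (auto intro: LeastI)
  then show thesis using assms cn that unfolding S_def by auto
qed

lemma matvec_bound:
  fixes A :: "real^'m^'n"
  assumes "\<forall>i j. \<bar>A$i$j\<bar> \<le> t"
  shows "\<bar>(A *v y)$i\<bar> \<le> real CARD('m) * t * norm y"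
proof -
  have t0: "0 \<le> t" using assms by (metis abs_ge_zero order_trans)
  have "\<bar>(A *v y)$i\<bar> = \<bar>\<Sum>j\<in>UNIV. A$i$j * y$j\<bar>" by (simp add: matrix_vector_mult_def)
  also have "\<dots> \<le> (\<Sum>j\<in>UNIV. \<bar>A$i$j * y$j\<bar>)" by (rule sum_abs)
  also have "\<dots> \<le> (\<Sum>j\<in>(UNIV::'m set). t * norm y)"
  proof (rule sum_mono)
    fix j
    have "\<bar>A$i$j * y$j\<bar> = \<bar>A$i$j\<bar> * \<bar>y$j\<bar>" by (simp add: abs_mult)
    also have "\<dots> \<le> t * norm y"
      using assms component_le_norm_cart[of y j] t0 by (intro mult_mono) auto
    finally show "\<bar>A$i$j * y$j\<bar> \<le> t * norm y" .
  qed
  also have "\<dots> = real CARD('m) * t * norm y" by simp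
  finally show ?thesis .
qed

lemma big_comp:
  fixes c :: "real^'m"
  shows "\<exists>j. \<bar>c$j\<bar> \<ge> norm c / real CARD('m)"
proof (rule ccontr)
  assume "\<not> ?thesis"
  then have h: "\<And>j. \<bar>c$j\<bar> < norm c / real CARD('m)" using not_le by blast
  have "norm c \<le> (\<Sum>j\<in>UNIV. \<bar>c$j\<bar>)" by (rule norm_le_l1_cart)
  also have "\<dots> < (\<Sum>j\<in>(UNIV::'m set). norm c / real CARD('m))"
    using h by (intro sum_strict_mono) auto
  also have "\<dots> = norm c" by simp
  finally show False by simp
qed


lemma core:
  fixes W :: "(real^'m) set"
  assumes dim: "lower_box_dim W < ereal (real CARD('n))" and d: "\<delta> > 0" and t: "t > 0"
  shows "\<exists>N\<in>null_sets lborel. {A::real^'m^'n. (\<forall>i j. \<bar>A$i$j\<bar> \<le> t) \<and> (\<exists>x\<in>W. norm x \<ge> \<delta> \<and> A *v x = 0)} \<subseteq> N"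
proof (rule null_from_small)
  fix \<eta> :: real assume eta: "\<eta> > 0"
  define B where "B = {A::real^'m^'n. (\<forall>i j. \<bar>A$i$j\<bar> \<le> t) \<and> (\<exists>x\<in>W. norm x \<ge> \<delta> \<and> A *v x = 0)}"
  obtain s' where s': "lower_box_dim W < ereal s'" "ereal s' < ereal (real CARD('n))"
    using ereal_dense2[OF dim] by blast
  define a where "a = real CARD('n) - s'"
  have apos: "a > 0" using s' by (simp add: a_def)
  define mm where "mm = real CARD('m)"
  have mpos: "mm > 0" by (simp add: mm_def)
  define r where "r = \<delta> / (2 * mm)"
  have rpos: "r > 0" using d mpos by (simp add: r_def)
  define M where "M = measure lborel (boxm (t+1) :: (real^'m^'n) set)"
  have M0: "M \<ge> 0" by (simp add: M_def)
  define C0 where "C0 = M * (6 * mm * t / r) ^ CARD('n)"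
  have C00: "C0 \<ge> 0" using M0 t mpos rpos by (simp add: C0_def)
  define b where "b = min (min 1 (\<delta>/2)) ((\<eta> / (C0 + 1)) powr (1/a))"
  have bpos: "b > 0" using d eta C00 by (simp add: b_def)
  have ev: "\<forall>\<^sub>F \<rho> in at_right (0::real). 0 < \<rho> \<and> \<rho> < b"
    using bpos by (auto simp: eventually_at_right_field)
  from frequently_ex[OF frequently_eventually_conj[OF freq_small[OF s'(1)] ev]]
  obtain \<rho> where rho: "0 < \<rho>" "\<rho> < b"
    and fr: "(case covering_number W \<rho> of enat k \<Rightarrow> ereal (ln (real k) / ln (1 / \<rho>)) | \<infinity> \<Rightarrow> \<infinity>) < ereal s'"
    by blast
  have r1: "\<rho> < 1" and r2: "\<rho> < \<delta>/2" using rho by (auto simp: b_def)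
  have r3: "\<rho> powr a < \<eta> / (C0 + 1)"
  proof -
    have "\<rho> powr a < ((\<eta> / (C0 + 1)) powr (1/a)) powr a"
      using rho apos by (intro powr_less_mono2) (auto simp: b_def)
    also have "\<dots> = \<eta> / (C0 + 1)" using apos eta C00 by (simp add: powr_powr)
    finally show ?thesis .
  qed
  obtain k where k: "covering_number W \<rho> = enat k"
    using fr by (cases "covering_number W \<rho>") auto
  have kq: "ln (real k) / ln (1 / \<rho>) < s'" using fr k by simp
  have lnpos: "ln (1/\<rho>) > 0" using rho r1 by simp
  have kb: "real k \<le> (1/\<rho>) powr s'"
  proof (cases "k = 0")
    case True then show ?thesis by simp
  next
    case False
    have "ln (real k) < s' * ln (1/\<rho>)" using kq lnpos by (simp add: divide_less_eq)
    then have "exp (ln (real k)) < exp (s' * ln (1/\<rho>))" by simp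
    then show ?thesis using False rho by (simp add: powr_def)
  qed
  obtain C where C: "finite C" "card C = k" "W \<subseteq> (\<Union>c\<in>C. ball c \<rho>)"
    using cover_obtain[OF k] by blast
  define C' where "C' = {c\<in>C. \<exists>x\<in>W. norm x \<ge> \<delta> \<and> x \<in> ball c \<rho>}"
  have C'fin: "finite C'" using C(1) by (simp add: C'_def)
  have C'card: "card C' \<le> k" using C(1,2) by (metis (no_types, lifting) C'_def card_mono mem_Collect_eq subsetI)
  define \<epsilon> where "\<epsilon> = mm * t * \<rho>"
  have epos: "\<epsilon> > 0" using mpos t rho by (simp add: \<epsilon>_def)
  define E where "E = (\<Union>c\<in>C'. slabm t c \<epsilon> :: (real^'m^'n) set)"
  have Esets: "E \<in> sets lborel" unfolding E_def using C'fin by (intro sets.finite_UN slabm_sets)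
  have BE: "B \<subseteq> E"
  proof
    fix A assume "A \<in> B"
    then obtain x where A: "\<forall>i j. \<bar>A$i$j\<bar> \<le> t" and x: "x \<in> W" "norm x \<ge> \<delta>" "A *v x = 0"
      unfolding B_def by blast
    obtain c where c: "c \<in> C" "x \<in> ball c \<rho>" using C(3) x(1) by blast
    have cC': "c \<in> C'" using c x unfolding C'_def by blast
    have "\<bar>(A *v c)$i\<bar> \<le> \<epsilon>" for i
    proof -
      have "A *v c = A *v (c - x)" using x(3) by (simp add: matrix_vector_mult_diff_distrib)
      then have "\<bar>(A *v c)$i\<bar> \<le> mm * t * norm (c - x)" using matvec_bound[OF A] by (simp add: mm_def)
      also have "\<dots> \<le> mm * t * \<rho>" using c(2) mpos t by (intro mult_left_mono) (auto simp: dist_norm)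
      finally show ?thesis by (simp add: \<epsilon>_def)
    qed
    then have "A \<in> slabm t c \<epsilon>" using A by (simp add: slabm_def)
    then show "A \<in> E" using cC' unfolding E_def by blast
  qed
  have slab_c: "measure lborel (slabm t c \<epsilon> :: (real^'m^'n) set) \<le> M * (6*\<epsilon>/r)^CARD('n)" if cC: "c \<in> C'" for c
  proof -
    obtain x where x: "x \<in> W" "norm x \<ge> \<delta>" "x \<in> ball c \<rho>" using cC unfolding C'_def by blast
    have "norm c \<ge> \<delta>/2"
    proof -
      have "norm x \<le> norm c + dist c x" using norm_triangle_ineq[of "x - c" c] by (simp add: dist_norm norm_minus_commute)
      then show ?thesis using x r2 by (simp add: dist_commute)
    qed
    obtain j0 where j0: "\<bar>c$j0\<bar> \<ge> norm c / mm" using big_comp[of c] by (auto simp: mm_def)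
    have "norm c / mm \<ge> r" proof -
      have "(\<delta>/2)/mm \<le> norm c / mm" using \<open>norm c \<ge> \<delta>/2\<close> mpos by (intro divide_right_mono) auto
      moreover have "r = (\<delta>/2)/mm" by (simp add: r_def)
      ultimately show ?thesis by simp
    qed
    then have "\<bar>c$j0\<bar> \<ge> r" using j0 by linarith
    from slab_bound[OF t epos rpos this] show ?thesis by (simp add: M_def)
  qed
  have "emeasure lborel E \<le> (\<Sum>c\<in>C'. emeasure lborel (slabm t c \<epsilon> :: (real^'m^'n) set))"
    unfolding E_def by (rule emeasure_subadditive_finite[OF C'fin]) (use slabm_sets in blast)
  also have "\<dots> = ennreal (\<Sum>c\<in>C'. measure lborel (slabm t c \<epsilon> :: (real^'m^'n) set))"
    by (simp add: emeasure_slabm sum_ennreal)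
  also have "\<dots> \<le> ennreal (\<Sum>c\<in>C'. M * (6*\<epsilon>/r)^CARD('n))"
    using slab_c by (intro ennreal_leI sum_mono) auto
  also have "\<dots> \<le> ennreal \<eta>"
  proof (rule ennreal_leI)
    have e6: "6*\<epsilon>/r = (6 * mm * t / r) * \<rho>" by (simp add: \<epsilon>_def)
    have "(\<Sum>c\<in>C'. M * (6*\<epsilon>/r)^CARD('n)) = real (card C') * (C0 * \<rho> ^ CARD('n))"
      unfolding e6 power_mult_distrib by (simp add: C0_def)
    also have "\<dots> \<le> (1/\<rho>) powr s' * (C0 * \<rho> ^ CARD('n))"
      using C'card kb C00 rho by (intro mult_right_mono) auto
    also have "\<dots> = C0 * \<rho> powr a"
    proof -
      have "\<rho> ^ CARD('n) = \<rho> powr (real CARD('n))" using rho by (simp add: powr_realpow)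
      moreover have "(1/\<rho>) powr s' = 1 / \<rho> powr s'" by (simp add: powr_divide)
      moreover have "\<rho> powr a = \<rho> powr (real CARD('n)) / \<rho> powr s'" by (simp add: a_def powr_diff)
      ultimately show ?thesis by simp
    qed
    also have "\<dots> \<le> (C0 + 1) * \<rho> powr a" by (intro mult_right_mono) auto
    also have "\<dots> \<le> \<eta>" using r3 C00 by (simp add: less_divide_eq mult.commute less_imp_le)
    finally show "(\<Sum>c\<in>C'. M * (6*\<epsilon>/r)^CARD('n)) \<le> \<eta>" .
  qed
  finally show "\<exists>E\<in>sets lborel. {A::real^'m^'n. (\<forall>i j. \<bar>A$i$j\<bar> \<le> t) \<and> (\<exists>x\<in>W. norm x \<ge> \<delta> \<and> A *v x = 0)} \<subseteq> E \<and> emeasure lborel E \<le> ennreal \<eta>"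
    using Esets BE unfolding B_def by blast
qed


theorem proposition1:
  fixes U :: "(real ^ 'm) set"
  assumes "U \<noteq> {}"
    and "lower_mod_box_dim U < ereal (real CARD('n))"
    and "CARD('n) \<le> CARD('m)"
  shows "AE A in (lborel :: (real ^ 'm ^ 'n) measure).
           {x. A *v x = 0} \<inter> (U - {0}) = {}"
proof -
  have "\<exists>z \<in> {(SUP i. lower_box_dim (V i)) | V :: nat \<Rightarrow> (real^'m) set.
      (\<forall>i. V i \<noteq> {} \<and> bounded (V i)) \<and> U \<subseteq> (\<Union>i. V i)}. z < ereal (real CARD('n))"
    using assms(2) unfolding lower_mod_box_dim_def by (simp only: Inf_less_iff)
  then obtain V :: "nat \<Rightarrow> (real^'m) set" where
    V: "U \<subseteq> (\<Union>i. V i)" "(SUP i. lower_box_dim (V i)) < ereal (real CARD('n))"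
    by auto
  have dimV: "lower_box_dim (V i) < ereal (real CARD('n))" for i
    using V(2) by (rule order.strict_trans1[OF SUP_upper, rotated]) simp
  define Bs where "Bs p = {A::real^'m^'n. (\<forall>i j. \<bar>A$i$j\<bar> \<le> real (Suc (snd (snd p)))) \<and>
        (\<exists>x\<in>V (fst p). norm x \<ge> 1 / real (Suc (fst (snd p))) \<and> A *v x = 0)}" for p :: "nat\<times>nat\<times>nat"
  have "\<forall>p. \<exists>N. N \<in> null_sets lborel \<and> Bs p \<subseteq> N"
  proof
    fix p :: "nat\<times>nat\<times>nat"
    have "\<exists>N\<in>null_sets lborel. Bs p \<subseteq> N" unfolding Bs_def
      by (rule core[OF dimV]) auto
    then show "\<exists>N. N \<in> null_sets lborel \<and> Bs p \<subseteq> N" by blast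
  qed
  from choice[OF this] obtain NN where NN: "\<And>p. NN p \<in> null_sets lborel" "\<And>p. Bs p \<subseteq> NN p"
    by blast
  show ?thesis
  proof (rule AE_I')
    show "(\<Union>p. NN p) \<in> null_sets lborel" by (rule null_sets_UN') (auto simp: NN(1))
    show "{A \<in> space lborel. \<not> ({x. A *v x = 0} \<inter> (U - {0}) = {})} \<subseteq> (\<Union>p. NN p)"
    proof
      fix A :: "real^'m^'n"
      assume "A \<in> {A \<in> space lborel. \<not> ({x. A *v x = 0} \<inter> (U - {0}) = {})}"
      then obtain x where x: "x \<in> U" "x \<noteq> 0" "A *v x = 0" by auto
      obtain i where i: "x \<in> V i" using V(1) x(1) by blast
      have "norm x > 0" using x(2) by simp
      then obtain n where n: "n > 0" "inverse (real n) < norm x" using ex_inverse_of_nat_less by blast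
      then obtain k where kn: "n = Suc k" by (cases n) auto
      have xk: "norm x \<ge> 1 / real (Suc k)" using n kn by (simp add: inverse_eq_divide)
      define T where "T = nat \<lceil>norm A\<rceil>"
      have AT: "\<bar>A$i'$j\<bar> \<le> real (Suc T)" for i' j
      proof -
        have "\<bar>A$i'$j\<bar> \<le> norm (A$i')" by (rule component_le_norm_cart)
        also have "\<dots> \<le> norm A" by (rule Finite_Cartesian_Product.norm_nth_le)
        also have "\<dots> \<le> real (Suc T)" unfolding T_def by linarith
        finally show ?thesis .
      qed
      have "A \<in> Bs (i, k, T)" unfolding Bs_def using AT i xk x(3) by auto
      then have "A \<in> NN (i, k, T)" using NN(2)[of "(i, k, T)"] by blast
      then show "A \<in> (\<Union>p. NN p)" by blast
    qed
  qed
qed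

end
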